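(* For all integers $k>1$ and $d\ge k$ there exist a finite point set $P\subset\mathbb{R}^d$ and properties $a_1,\dots,a_k\colon P\to\{-1,1\}$, each strictly linearly separable on $P$, such that exactly $2^k-1$ distinct labels occur in $P$, and such that for every unit vector $w\in\mathbb{R}^d$ the following holds: if $a_2,\dots,a_k$ are all strictly linearly separable on the projected set $P'$, then $a_1$ is also strictly linearly separable on $P'$.
   Context: For a finite $P\subset\mathbb{R}^d$ with properties $a_i\colon P\to\{-1,1\}$, write $P^i_{-}=\{p\in P: a_i(p)=-1\}$ and $P^i_{+}=\{p\in P: a_i(p)=1\}$. The label of $p$ is the tuple $(a_1(p),\dots,a_k(p))$. For a unit vector $w$, the projection along $w$ maps $p$ to $p'=p-(p\cdot w)w\in w^\perp$, and $P'$ denotes the image of $P$ (properties are carried over: $a_i(p')=a_i(p)$). Two finite sets $X,Y$ contained in a linear subspace $L$ are strictly linearly separable (in $L$) if there exist a unit vector $v\in L$ and $c\in\mathbb{R}$ with $v\cdot x<c<v\cdot y$ for all $x\in X,y\in Y$; for projected sets $L=w^\perp$, otherwise $L=\mathbb{R}^d$. A property $a_i$ is strictly linearly separable on a set if the corresponding sets $P^i_-$ and $P^i_+$ (resp. their projections) are. *)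

theory Defs
  imports "HOL-Analysis.Analysis"
begin

definition strictly_lin_sep_in :: "'a::euclidean_space set \<Rightarrow> 'a set \<Rightarrow> 'a set \<Rightarrow> bool" where
  "strictly_lin_sep_in L X Y \<longleftrightarrow>
     (\<exists>v c. v \<in> L \<and> norm v = 1 \<and> (\<forall>x\<in>X. v \<bullet> x < c) \<and> (\<forall>y\<in>Y. c < v \<bullet> y))"

definition proj_along :: "'a::euclidean_space \<Rightarrow> 'a \<Rightarrow> 'a" where
  "proj_along w p = p - (p \<bullet> w) *\<^sub>R w"

definition perp_space :: "'a::euclidean_space \<Rightarrow> 'a set" where
  "perp_space w = {x. x \<bullet> w = 0}"

definition neg_part :: "'a set \<Rightarrow> ('a \<Rightarrow> int) \<Rightarrow> 'a set" where
  "neg_part P f = {p \<in> P. f p = -1}"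

definition pos_part :: "'a set \<Rightarrow> ('a \<Rightarrow> int) \<Rightarrow> 'a set" where
  "pos_part P f = {p \<in> P. f p = 1}"

definition prop_sep :: "'a::euclidean_space set \<Rightarrow> ('a \<Rightarrow> int) \<Rightarrow> bool" where
  "prop_sep P f \<longleftrightarrow> strictly_lin_sep_in UNIV (neg_part P f) (pos_part P f)"

definition prop_sep_proj :: "'a::euclidean_space \<Rightarrow> 'a set \<Rightarrow> ('a \<Rightarrow> int) \<Rightarrow> bool" where
  "prop_sep_proj w P f \<longleftrightarrow>
     strictly_lin_sep_in (perp_space w) (proj_along w ` neg_part P f) (proj_along w ` pos_part P f)"

definition label :: "nat \<Rightarrow> (nat \<Rightarrow> 'a \<Rightarrow> int) \<Rightarrow> 'a \<Rightarrow> int list" where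
  "label k a p = map (\<lambda>i. a i p) [1..<k+1]"

end

theory Submission
  imports Defs
begin

definition mkv :: "(nat \<Rightarrow> 'n::finite) \<Rightarrow> nat \<Rightarrow> (nat \<Rightarrow> real) \<Rightarrow> real^'n" where
  "mkv g m f = (\<chi> i. if i \<in> g ` {..<m} then f (the_inv_into {..<m} g i) else 0)"

lemma mkv_g: "inj_on g {..<m} \<Longrightarrow> t < m \<Longrightarrow> mkv g m f $ g t = f t"
  unfolding mkv_def by (simp add: the_inv_into_f_f)

lemma mkv_out: "i \<notin> g ` {..<m} \<Longrightarrow> mkv g m f $ i = 0"
  unfolding mkv_def by simp

lemma inner_G:
  fixes v w :: "real^'n::finite"
  assumes "inj_on g {..<m}" "\<forall>i. i \<notin> g ` {..<m} \<longrightarrow> w $ i = 0"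
  shows "v \<bullet> w = (\<Sum>t<m. v $ g t * w $ g t)"
proof -
  have "v \<bullet> w = (\<Sum>i\<in>UNIV. v $ i * w $ i)" by (simp add: inner_vec_def)
  also have "\<dots> = (\<Sum>i\<in>g ` {..<m}. v $ i * w $ i)"
    by (rule sum.mono_neutral_right) (use assms in auto)
  also have "\<dots> = (\<Sum>t<m. v $ g t * w $ g t)"
    by (subst sum.reindex) (use assms in auto)
  finally show ?thesis .
qed

lemma sum_ge_big:
  fixes f :: "nat \<Rightarrow> real"
  assumes "\<forall>t<m. f t \<ge> -1" "t0 < m" "f t0 = B"
  shows "(\<Sum>t<m. f t) \<ge> B - (real m - 1)"
proof -
  have "(\<Sum>t<m. f t) = f t0 + (\<Sum>t\<in>{..<m}-{t0}. f t)"
    using assms(2) by (simp add: sum.remove)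
  moreover have "(\<Sum>t\<in>{..<m}-{t0}. f t) \<ge> (\<Sum>t\<in>{..<m}-{t0}. -1)"
    by (rule sum_mono) (use assms(1) in auto)
  moreover have "card ({..<m}-{t0}) = m - 1" using assms(2) by simp
  ultimately show ?thesis using assms by (simp add: of_nat_diff)
qed

lemma sum_le_m:
  fixes f :: "nat \<Rightarrow> real"
  assumes "\<forall>t<m. f t \<le> 1"
  shows "(\<Sum>t<m. f t) \<le> real m"
proof -
  have "(\<Sum>t<m. f t) \<le> (\<Sum>t<m. 1)" by (rule sum_mono) (use assms in auto)
  then show ?thesis by simp
qed

lemma key_ineq:
  fixes v w :: "nat \<Rightarrow> real"
  assumes "(\<Sum>t<m. v t * w t) = 0" "j < m" "\<forall>t<m. \<bar>w t\<bar> \<le> \<bar>w j\<bar>" "w j \<noteq> 0"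
  shows "\<bar>v j\<bar> \<le> (\<Sum>t\<in>{..<m}-{j}. \<bar>v t\<bar>)"
proof -
  have "(\<Sum>t<m. v t * w t) = v j * w j + (\<Sum>t\<in>{..<m}-{j}. v t * w t)"
    using assms(2) by (simp add: sum.remove)
  hence "v j * w j = - (\<Sum>t\<in>{..<m}-{j}. v t * w t)" using assms(1) by simp
  hence "\<bar>v j\<bar> * \<bar>w j\<bar> = \<bar>\<Sum>t\<in>{..<m}-{j}. v t * w t\<bar>" by (metis abs_minus_cancel abs_mult)
  also have "\<dots> \<le> (\<Sum>t\<in>{..<m}-{j}. \<bar>v t * w t\<bar>)" by (rule sum_abs)
  also have "\<dots> \<le> (\<Sum>t\<in>{..<m}-{j}. \<bar>v t\<bar> * \<bar>w j\<bar>)"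
    by (rule sum_mono) (use assms(3) in \<open>auto simp: abs_mult intro: mult_left_mono\<close>)
  also have "\<dots> = (\<Sum>t\<in>{..<m}-{j}. \<bar>v t\<bar>) * \<bar>w j\<bar>" by (simp add: sum_distrib_right)
  finally show ?thesis using assms(4) by simp
qed

theorem mainTheorem2:
  fixes k :: nat
  assumes "k > 1" and "CARD('n::finite) \<ge> k"
  shows "\<exists>(P :: (real^'n) set) (a :: nat \<Rightarrow> real^'n \<Rightarrow> int).
           finite P
         \<and> (\<forall>i\<in>{1..k}. \<forall>p\<in>P. a i p \<in> {-1, 1})
         \<and> (\<forall>i\<in>{1..k}. prop_sep P (a i))
         \<and> card (label k a ` P) = 2 ^ k - 1
         \<and> (\<forall>w :: real^'n. norm w = 1 \<longrightarrow>
              (\<forall>i\<in>{2..k}. prop_sep_proj w P (a i)) \<longrightarrow> prop_sep_proj w P (a 1))"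
proof -
  define m where "m = k - 1"
  have km: "k = m + 1" "m \<ge> 1" using assms(1) by (auto simp: m_def)
  obtain h where h: "bij_betw h {0..<CARD('n)} (UNIV::'n set)"
    using ex_bij_betw_nat_finite[of "UNIV::'n set"] by auto
  have injh: "inj_on h {0..<CARD('n)}" using h by (simp add: bij_betw_def)
  have inj: "inj_on h {..<m}"
    by (rule inj_on_subset[OF injh]) (use assms(2) km in auto)
  define G where "G = h ` {..<m}"
  have eout: "h m \<notin> G"
  proof
    assume "h m \<in> G"
    then obtain t where t: "t < m" "h t = h m" by (auto simp: G_def)
    have "t = m" using inj_onD[OF injh t(2)] t(1) assms(2) km by auto
    thus False using t by simp
  qed
  define M :: real where "M = 2 * real k"
  define C where "C = PiE {..<m} (\<lambda>_. {-1, 1::real})"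
  define E where "E = PiE {..<m} (\<lambda>_. {-1, M})"
  define P where "P = mkv h m ` (C \<union> E)"
  define \<sigma> where "\<sigma> p = (\<Sum>t<m. p $ h t)" for p :: "real^'n"
  define a :: "nat \<Rightarrow> real^'n \<Rightarrow> int" where
    "a i p = (if i = 1 then (if \<sigma> p > real k then 1 else -1)
              else if p $ h (i - 2) > 0 then 1 else -1)" for i p
  have Pout: "\<forall>i. i \<notin> G \<longrightarrow> p $ i = 0" if pP: "p \<in> P" for p
  proof -
    obtain f where "p = mkv h m f" using pP unfolding P_def by blast
    thus ?thesis unfolding G_def using mkv_out by blast
  qed
  have Pcoord: "p $ h t \<in> {-1, 1, M}" if pt: "p \<in> P" "t < m" for p t
  proof -
    obtain f where f: "f \<in> C \<union> E" "p = mkv h m f" using pt(1) unfolding P_def by blast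
    have "p $ h t = f t" using f(2) mkv_g[OF inj pt(2)] by simp
    moreover have "f t \<in> {-1, 1, M}" using f(1) pt(2) unfolding C_def E_def
      by (auto dest!: PiE_mem)
    ultimately show ?thesis by simp
  qed
  have Mk: "M > 0" using km by (simp add: M_def)
  have sig_mkv: "\<sigma> (mkv h m f) = (\<Sum>t<m. f t)" for f
    unfolding \<sigma>_def by (rule sum.cong) (auto simp: mkv_g[OF inj])
  have sigC: "\<sigma> (mkv h m f) \<le> real k - 1" if "f \<in> C" for f
  proof -
    have "(\<Sum>t<m. f t) \<le> real m" by (rule sum_le_m) (use that in \<open>force simp: C_def PiE_iff\<close>)
    thus ?thesis by (simp add: sig_mkv km)
  qed
  have sigE: "\<sigma> (mkv h m f) \<ge> real k + 2" if "f \<in> E" "t0 < m" "f t0 = M" for f t0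
  proof -
    have "(\<Sum>t<m. f t) \<ge> M - (real m - 1)"
    proof -
      have "\<forall>t<m. f t \<ge> -1" using that(1) Mk by (force simp: E_def PiE_iff)
      thus ?thesis using sum_ge_big[of m f t0 M] that(2,3) by blast
    qed
    thus ?thesis by (simp add: sig_mkv km M_def)
  qed
  have dich: "\<sigma> p \<le> real k - 1 \<or> \<sigma> p \<ge> real k + 2" if pP: "p \<in> P" for p
  proof -
    obtain f where f: "f \<in> C \<union> E" "p = mkv h m f" using pP by (auto simp: P_def)
    show ?thesis
    proof (cases "f \<in> C")
      case True thus ?thesis using sigC f by auto
    next
      case False
      hence fE: "f \<in> E" using f by auto
      show ?thesis
      proof (cases "\<exists>t0<m. f t0 = M")
        case True thus ?thesis using sigE fE f by auto
      next
        case False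
        hence "\<forall>t<m. f t = -1" using fE by (auto simp: E_def PiE_iff)
        hence "f \<in> C" using fE by (auto simp: E_def C_def PiE_iff)
        thus ?thesis using sigC f by auto
      qed
    qed
  qed
  have finP: "finite P" by (simp add: P_def C_def E_def finite_PiE)
  have vals: "\<forall>i\<in>{1..k}. \<forall>p\<in>P. a i p \<in> {-1, 1}" by (simp add: a_def)
  have sep1: "strictly_lin_sep_in L (T ` neg_part P (a 1)) (T ` pos_part P (a 1))"
    if "v0 \<noteq> 0" "v0 /\<^sub>R norm v0 \<in> L" "\<And>p. p \<in> P \<Longrightarrow> v0 \<bullet> T p = \<sigma> p" for v0 L T
  proof -
    have n0: "norm v0 > 0" using that(1) by simp
    show ?thesis unfolding strictly_lin_sep_in_def
    proof (intro exI conjI ballI)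
      show "v0 /\<^sub>R norm v0 \<in> L" by fact
      show "norm (v0 /\<^sub>R norm v0) = 1" using n0 by simp
    next
      fix x assume "x \<in> T ` neg_part P (a 1)"
      then obtain p where p: "p \<in> P" "a 1 p = -1" "x = T p" by (auto simp: neg_part_def)
      hence "\<sigma> p \<le> real k" by (auto simp: a_def split: if_splits)
      hence "\<sigma> p \<le> real k - 1" using dich p by force
      moreover have "(v0 /\<^sub>R norm v0) \<bullet> x = \<sigma> p / norm v0"
        using p that(3) by (simp add: field_simps)
      ultimately show "(v0 /\<^sub>R norm v0) \<bullet> x < (real k + 1/2) / norm v0"
        using n0 by (simp add: divide_strict_right_mono)
    next
      fix y assume "y \<in> T ` pos_part P (a 1)"
      then obtain p where p: "p \<in> P" "a 1 p = 1" "y = T p" by (auto simp: pos_part_def)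
      hence "\<sigma> p > real k" by (auto simp: a_def split: if_splits)
      hence "\<sigma> p \<ge> real k + 2" using dich p by force
      moreover have "(v0 /\<^sub>R norm v0) \<bullet> y = \<sigma> p / norm v0"
        using p that(3) by (simp add: field_simps)
      ultimately show "(real k + 1/2) / norm v0 < (v0 /\<^sub>R norm v0) \<bullet> y"
        using n0 by (simp add: divide_strict_right_mono)
    qed
  qed
  define u :: "real^'n" where "u = (\<chi> i. if i \<in> G then 1 else 0)"
  have u_in: "u \<bullet> p = \<sigma> p" if "p \<in> P" for p
    using inner_G[OF inj, of p u] Pout[OF that] by (simp add: \<sigma>_def u_def G_def)
  have uu: "u \<bullet> u > 0"
  proof -
    have "u $ h 0 = 1" using km by (simp add: u_def G_def)
    hence "u \<noteq> 0" by auto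
    thus ?thesis by simp
  qed
  have sepall: "\<forall>i\<in>{1..k}. prop_sep P (a i)"
  proof
    fix i assume i: "i \<in> {1..k}"
    show "prop_sep P (a i)"
    proof (cases "i = 1")
      case True
      have "u \<noteq> 0" using uu by auto
      thus ?thesis unfolding prop_sep_def True
        using sep1[of u UNIV id] u_in by simp
    next
      case False
      define j where "j = i - 2"
      have j: "j < m" using i False km by (auto simp: j_def)
      have nz: "p $ h j \<noteq> 0" if "p \<in> P" for p using Pcoord[OF that j] Mk by auto
      show ?thesis unfolding prop_sep_def strictly_lin_sep_in_def
      proof (intro exI[of _ "axis (h j) 1"] exI[of _ 0] conjI ballI)
        show "norm (axis (h j) (1::real)) = 1" by simp
      next
        fix x assume "x \<in> neg_part P (a i)"
        hence "x \<in> P" "\<not> x $ h j > 0" using False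
          by (auto simp: neg_part_def a_def j_def split: if_splits)
        thus "axis (h j) 1 \<bullet> x < 0" using nz[of x]
          by (simp add: inner_axis')
      next
        fix x assume "x \<in> pos_part P (a i)"
        thus "0 < axis (h j) 1 \<bullet> x" using False
          by (auto simp: pos_part_def a_def j_def inner_axis' split: if_splits)
      qed simp
    qed
  qed
  have lab_nth: "label k a p ! n = a (n+1) p" if "n < k" for p n
    using that unfolding label_def by (simp del: upt_Suc add: nth_map)
  have lab_len: "length (label k a p) = k" for p by (simp del: upt_Suc add: label_def)
  define ml :: "int list" where "ml = 1 # replicate m (-1)"
  define Lset where "Lset = {xs. set xs \<subseteq> {-1,1::int} \<and> length xs = k}"
  have labset: "label k a ` P = Lset - {ml}"
  proof (intro equalityI subsetI)
    fix l assume "l \<in> label k a ` P"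
    then obtain p where p: "p \<in> P" "l = label k a p" by auto
    have "l \<noteq> ml"
    proof
      assume eq: "l = ml"
      have "a 1 p = 1" using lab_nth[of 0 p] eq p km by (simp add: ml_def)
      hence s: "\<sigma> p > real k" by (simp add: a_def split: if_splits)
      have "p $ h t \<le> 0" if t: "t < m" for t
      proof -
        have "a (t+2) p = -1" using lab_nth[of "t+1" p] eq p t km by (simp add: ml_def)
        thus ?thesis by (simp add: a_def split: if_splits)
      qed
      hence "\<sigma> p \<le> 0" unfolding \<sigma>_def by (intro sum_nonpos) auto
      thus False using s by simp
    qed
    moreover have "set l \<subseteq> {-1,1}" using p by (auto simp: label_def a_def)
    ultimately show "l \<in> Lset - {ml}" using p lab_len by (simp add: Lset_def)
  next
    fix l assume l: "l \<in> Lset - {ml}"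
    have len: "length l = k" and vals: "set l \<subseteq> {-1,1}" "l \<noteq> ml" using l by (auto simp: Lset_def)
    have lv: "l ! n \<in> {-1,1}" if "n < k" for n using vals(1) that len nth_mem[of n l] by blast
    define f where "f = restrict (\<lambda>t. if l ! (t+1) = 1 then (if l ! 0 = 1 then M else 1) else -1) {..<m}"
    have fCE: "f \<in> C \<union> E" by (auto simp: f_def C_def E_def)
    let ?p = "mkv h m f"
    have pP: "?p \<in> P" using fCE by (simp add: P_def)
    have pc: "?p $ h t = f t" if "t<m" for t using mkv_g[OF inj that] .
    have "label k a ?p = l"
    proof (rule nth_equalityI)
      show "length (label k a ?p) = length l" using len lab_len by simp
      fix n assume n: "n < length (label k a ?p)"
      hence nk: "n < k" by (simp add: lab_len)
      show "label k a ?p ! n = l ! n"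
      proof (cases n)
        case 0
        show ?thesis
        proof (cases "l ! 0 = 1")
          case True
          have "\<exists>t<m. l ! (t+1) = 1"
          proof (rule ccontr)
            assume "\<not> ?thesis"
            hence allm: "\<forall>t<m. l ! (t+1) = -1" using lv km by force
            have "l = ml"
            proof (rule nth_equalityI)
              show "length l = length ml" using len km by (simp add: ml_def)
              fix i assume "i < length l"
              thus "l ! i = ml ! i" using allm True len km
                by (cases i) (auto simp: ml_def)
            qed
            thus False using vals by simp
          qed
          then obtain t0 where t0: "t0 < m" "l ! (t0+1) = 1" by auto
          have fE: "f \<in> E" using True by (auto simp: f_def E_def)
          have "f t0 = M" using t0 True by (simp add: f_def)
          hence "\<sigma> ?p \<ge> real k + 2" using sigE fE t0 by blast
          thus ?thesis using 0 True lab_nth[OF nk] by (simp add: a_def)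
        next
          case False
          hence l0: "l ! 0 = -1" using lv[of 0] km by auto
          have fC: "f \<in> C" using False by (auto simp: f_def C_def)
          have "\<sigma> ?p \<le> real k - 1" using sigC fC by blast
          thus ?thesis using 0 l0 lab_nth[OF nk] by (simp add: a_def)
        qed
      next
        case (Suc t)
        hence t: "t < m" using nk km by simp
        have "l ! (t+1) \<in> {-1,1}" using lv nk Suc by simp
        thus ?thesis using Suc lab_nth[OF nk] pc[OF t] t Mk by (auto simp: a_def f_def)
      qed
    qed
    thus "l \<in> label k a ` P" using pP by force
  qed
  have card_lab: "card (label k a ` P) = 2 ^ k - 1"
  proof -
    have "card Lset = card {-1,1::int} ^ k" unfolding Lset_def by (rule card_lists_length_eq) simp
    also have "card {-1,1::int} = 2" by simp
    finally have "card Lset = 2 ^ k" .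
    moreover have "ml \<in> Lset" using km by (simp add: Lset_def ml_def)
    moreover have "finite Lset" unfolding Lset_def by (rule finite_lists_length_eq) simp
    ultimately show ?thesis using labset by (simp add: card_Diff_singleton)
  qed
  have proj: "\<forall>w :: real^'n. norm w = 1 \<longrightarrow> (\<forall>i\<in>{2..k}. prop_sep_proj w P (a i)) \<longrightarrow> prop_sep_proj w P (a 1)"
  proof (intro allI impI)
    fix w :: "real^'n" assume w1: "norm w = 1" and hyp: "\<forall>i\<in>{2..k}. prop_sep_proj w P (a i)"
    have projdot: "v \<bullet> proj_along w p = v \<bullet> p" if "v \<bullet> w = 0" for v p
      using that by (simp add: proj_along_def inner_diff_right)
    show "prop_sep_proj w P (a 1)"
    proof (cases "\<exists>e. e \<notin> G \<and> w $ e \<noteq> 0")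
      case True
      then obtain e where e: "e \<notin> G" "w $ e \<noteq> 0" by auto
      define wp :: "real^'n" where "wp = (\<chi> i. if i \<in> G then 0 else w $ i)"
      have wpwp: "wp \<bullet> wp > 0"
      proof -
        have "wp $ e \<noteq> 0" using e by (simp add: wp_def)
        hence "wp \<noteq> 0" by auto
        thus ?thesis by simp
      qed
      have wpw: "wp \<bullet> w = wp \<bullet> wp" unfolding inner_vec_def wp_def by (rule sum.cong) auto
      have wpu: "wp \<bullet> u = 0" unfolding inner_vec_def wp_def u_def by (rule sum.neutral) auto
      have wpP: "wp \<bullet> p = 0" if "p \<in> P" for p
        unfolding inner_vec_def wp_def using Pout[OF that] by (intro sum.neutral) auto
      define v0 where "v0 = u - ((u \<bullet> w) / (wp \<bullet> wp)) *\<^sub>R wp"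
      have v0w: "v0 \<bullet> w = 0" using wpwp by (simp add: v0_def inner_diff_left wpw)
      have v0u: "v0 \<bullet> u = u \<bullet> u" by (simp add: v0_def inner_diff_left wpu)
      hence v0nz: "v0 \<noteq> 0" using uu by auto
      have v0p: "v0 \<bullet> proj_along w p = \<sigma> p" if "p \<in> P" for p
        using projdot[OF v0w] u_in[OF that] wpP[OF that] by (simp add: v0_def inner_diff_left)
      have inL: "v0 /\<^sub>R norm v0 \<in> perp_space w" using v0w by (simp add: perp_space_def)
      show ?thesis unfolding prop_sep_proj_def by (rule sep1[OF v0nz inL v0p])
    next
      case False
      hence wG: "\<forall>i. i \<notin> G \<longrightarrow> w $ i = 0" by auto
      define mx where "mx = Max ((\<lambda>t. \<bar>w $ h t\<bar>) ` {..<m})"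
      have "mx \<in> (\<lambda>t. \<bar>w $ h t\<bar>) ` {..<m}" unfolding mx_def using km by (intro Max_in) (auto simp: lessThan_empty_iff)
      then obtain j where j: "j < m" "\<bar>w $ h j\<bar> = mx" by auto
      have jmax: "\<forall>t<m. \<bar>w $ h t\<bar> \<le> \<bar>w $ h j\<bar>" unfolding j(2) mx_def by (auto intro: Max_ge)
      have wj: "w $ h j \<noteq> 0"
      proof
        assume "w $ h j = 0"
        hence "\<forall>t<m. w $ h t = 0" using jmax by force
        hence "w = 0" using wG unfolding vec_eq_iff G_def by (metis imageE lessThan_iff zero_index)
        thus False using w1 by simp
      qed
      have "prop_sep_proj w P (a (j+2))" using hyp j km by auto
      then obtain v c where v: "v \<bullet> w = 0"
        "\<forall>x\<in>proj_along w ` neg_part P (a (j+2)). v \<bullet> x < c"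
        "\<forall>y\<in>proj_along w ` pos_part P (a (j+2)). c < v \<bullet> y"
        unfolding prop_sep_proj_def strictly_lin_sep_in_def perp_space_def by (auto simp: inner_commute)
      define fy where "fy = restrict (\<lambda>t. if t = j then 1 else if v $ h t \<ge> 0 then -1 else (1::real)) {..<m}"
      define fx where "fx = restrict (\<lambda>t. - fy t) {..<m}"
      have fyC: "fy \<in> C" by (auto simp: fy_def C_def)
      have fxC: "fx \<in> C" by (auto simp: fx_def fy_def C_def)
      let ?y = "mkv h m fy" and ?x = "mkv h m fx"
      have yP: "?y \<in> P" and xP: "?x \<in> P" using fyC fxC by (auto simp: P_def)
      have ay: "a (j+2) ?y = 1" using mkv_g[OF inj j(1)] j by (simp add: a_def fy_def)
      have ax: "a (j+2) ?x = -1" using mkv_g[OF inj j(1)] j by (simp add: a_def fx_def fy_def)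
      have c1: "c < v \<bullet> ?y" using v(3) yP ay projdot[OF v(1), of ?y] by (force simp: pos_part_def)
      have c2: "v \<bullet> ?x < c" using v(2) xP ax projdot[OF v(1), of ?x] by (force simp: neg_part_def)
      have vy: "v \<bullet> ?y = (\<Sum>t<m. v $ h t * fy t)"
        using inner_G[OF inj, of ?y v] Pout[OF yP] mkv_g[OF inj] by (simp add: G_def)
      have vx: "v \<bullet> ?x = - (\<Sum>t<m. v $ h t * fy t)"
      proof -
        have "v \<bullet> ?x = (\<Sum>t<m. v $ h t * fx t)"
          using inner_G[OF inj, of ?x v] Pout[OF xP] mkv_g[OF inj] by (simp add: G_def)
        also have "\<dots> = (\<Sum>t<m. - (v $ h t * fy t))" by (rule sum.cong) (auto simp: fx_def)
        finally show ?thesis by (simp add: sum_negf)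
      qed
      have pos: "(\<Sum>t<m. v $ h t * fy t) > 0" using c1 c2 vx vy by linarith
      have "(\<Sum>t<m. v $ h t * w $ h t) = 0" using inner_G[OF inj, of w v] wG v(1) by (simp add: G_def)
      hence kj: "\<bar>v $ h j\<bar> \<le> (\<Sum>t\<in>{..<m}-{j}. \<bar>v $ h t\<bar>)"
        using key_ineq[where m=m and v="\<lambda>t. v $ h t" and w="\<lambda>t. w $ h t" and j=j] j(1) jmax wj by simp
      have s1: "(\<Sum>t<m. v $ h t * fy t) = v $ h j * fy j + (\<Sum>t\<in>{..<m}-{j}. v $ h t * fy t)"
        using j(1) by (simp add: sum.remove)
      have s2: "(\<Sum>t\<in>{..<m}-{j}. v $ h t * fy t) = (\<Sum>t\<in>{..<m}-{j}. - \<bar>v $ h t\<bar>)"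
        by (rule sum.cong) (auto simp: fy_def)
      have s3: "fy j = 1" using j(1) by (simp add: fy_def)
      have False using pos s1 s2 s3 kj by (simp add: sum_negf)
      thus ?thesis ..
    qed
  qed
  show ?thesis
    by (intro exI[of _ P] exI[of _ a] conjI finP vals sepall card_lab proj)
qed

end
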